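(* Let $d\ge2$ be an integer. For $\lambda\in(0,1)$ let $\bar F_{R,\lambda}$ be the solution of $\bar F'(w)=\lambda\bar F(w)^d-\bar F(w)$ with $\bar F(0)=1$, and let $\mathbb E[R_\lambda]=\int_0^\infty\bar F_{R,\lambda}(w)\,dw$. Then $$\lim_{\lambda\to1^-}-\frac{\mathbb E[R_\lambda]}{\log(1-\lambda)}=\frac1{d-1}.$$
   Context: $\bar F_{R,\lambda}$ is the ccdf of the limiting response time under the Red($d$) policy with i.i.d. exponential(1) replicas. *)

theory Defs
  imports "HOL-Analysis.Analysis"
begin

end

theory Submission
  imports Defs "HOL-Real_Asymp.Real_Asymp"
begin


lemma lin_unique:
  fixes W c :: "real \<Rightarrow> real"
  assumes T: "0 \<le> T" and cc: "continuous_on {0..T} c"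
    and W': "\<And>x. x \<in> {0..T} \<Longrightarrow> (W has_real_derivative c x * W x) (at x within {0..T})"
    and W0: "W 0 = 0"
  shows "W T = 0"
proof -
  define C where "C x = integral {0..x} c" for x
  have C': "(C has_real_derivative c x) (at x within {0..T})" if "x \<in> {0..T}" for x
    unfolding C_def using integral_has_real_derivative[OF cc that] .
  have P': "((\<lambda>x. W x * exp (- C x)) has_real_derivative 0) (at x within {0..T})"
    if "x \<in> {0..T}" for x
  proof -
    have "((\<lambda>x. W x * exp (- C x)) has_real_derivative
           c x * W x * exp (- C x) + exp (- C x) * - c x * W x) (at x within {0..T})"
      using DERIV_mult[OF W'[OF that] DERIV_chain2[OF DERIV_exp DERIV_minus[OF C'[OF that]]]] .
    then show ?thesis by (simp add: algebra_simps)
  qed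
  obtain k where k: "\<forall>x\<in>{0..T}. W x * exp (- C x) = k"
    using has_field_derivative_zero_constant[OF convex_real_interval(5) P'] by blast
  have "W T * exp (- C T) = W 0 * exp (- C 0)" using k T by auto
  then show ?thesis using W0 by simp
qed

lemma explicit_sol:
  fixes f :: "real \<Rightarrow> real" and j :: nat and l :: real
  assumes l: "0 < l" "l < 1" and f0: "f 0 = 1"
    and ode: "\<And>w. 0 \<le> w \<Longrightarrow> (f has_real_derivative (l * f w ^ Suc (Suc j) - f w)) (at w within {0..})"
  shows "\<forall>w\<ge>0. f w ^ Suc j * (l + (1-l) * exp (real (Suc j) * w)) = 1 \<and> f w > 0"
proof -
  define m where "m = Suc j"
  define g where "g w = l + (1-l) * exp (real m * w)" for w
  have cont: "continuous_on {0..} f"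
    by (rule DERIV_continuous_on[OF ode]) auto
  have key: "f T ^ m * g T = 1" if T: "0 \<le> T" for T
  proof -
    have "f T ^ m * g T - 1 = 0"
    proof (rule lin_unique[where W="\<lambda>x. f x ^ m * g x - 1" and c="\<lambda>x. real m * l * f x ^ m", OF T])
      show "continuous_on {0..T} (\<lambda>x. real m * l * f x ^ m)"
        by (intro continuous_intros continuous_on_subset[OF cont]) auto
      show "f 0 ^ m * g 0 - 1 = 0" using f0 by (simp add: g_def)
      fix x assume x: "x \<in> {0..T}"
      have fd: "(f has_real_derivative (l * f x ^ Suc (Suc j) - f x)) (at x within {0..T})"
        using DERIV_subset[OF ode] x by auto
      have gd: "(g has_real_derivative (1-l) * (exp (real m * x) * real m)) (at x within {0..T})"
        unfolding g_def
        by (auto intro!: derivative_eq_intros)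
      have "((\<lambda>x. f x ^ m * g x - 1) has_real_derivative
          (of_nat m * ((l * f x ^ Suc (Suc j) - f x) * f x ^ (m - Suc 0))) * g x + ((1-l) * (exp (real m * x) * real m)) * f x ^ m - 0)
           (at x within {0..T})"
        by (intro DERIV_diff DERIV_mult DERIV_power fd gd DERIV_const)
      moreover have "(of_nat m * ((l * f x ^ Suc (Suc j) - f x) * f x ^ (m - Suc 0))) * g x + ((1-l) * (exp (real m * x) * real m)) * f x ^ m - 0
          = real m * l * f x ^ m * (f x ^ m * g x - 1)"
        unfolding m_def g_def by (simp add: algebra_simps)
      ultimately show "((\<lambda>x. f x ^ m * g x - 1) has_real_derivative
          real m * l * f x ^ m * (f x ^ m * g x - 1)) (at x within {0..T})" by simp
    qed
    then show ?thesis by simp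
  qed
  have pos: "f w > 0" if w: "0 \<le> w" for w
  proof (rule ccontr)
    assume "\<not> f w > 0"
    then have "f w \<le> 0" by simp
    then obtain x where x: "0 \<le> x" "x \<le> w" "f x = 0"
      using IVT2'[of f w 0 0] f0 w continuous_on_subset[OF cont, of "{0..w}"] by auto
    then show False using key[of x] by (simp add: m_def)
  qed
  show ?thesis using key pos by (simp add: m_def g_def)
qed

lemma pow_le_base:
  fixes x y :: real
  assumes "x ^ m \<le> y ^ m" "0 \<le> y" "m \<ge> 1"
  shows "x \<le> y"
proof -
  obtain j where "m = Suc j" using assms(3) by (cases m) auto
  then show ?thesis using power_le_imp_le_base[of x j y] assms by simp
qed

lemma int_bounds:
  fixes f :: "real \<Rightarrow> real" and m :: nat and l :: real
  assumes m: "m \<ge> 1" and l: "0 < l" "l < 1"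
    and sol: "\<And>w. 0 \<le> w \<Longrightarrow> f w ^ m * (l + (1-l) * exp (real m * w)) = 1"
    and pos: "\<And>w. 0 \<le> w \<Longrightarrow> f w > 0"
    and cont: "continuous_on {0..} f"
  shows "- ln (1-l) / m - 1 / m \<le> integral {0..} f \<and>
         integral {0..} f \<le> (- ln (1-l) / m) * root m (1/l) + 1"
proof -
  define a where "a = 1 - l"
  have a: "0 < a" "a < 1" using l by (auto simp: a_def)
  define L where "L = - ln a"
  have L: "L > 0" using a by (simp add: L_def)
  define c where "c = L / m"
  have mpos: "real m > 0" using m by simp
  have c: "c > 0" using L mpos by (simp add: c_def)
  have emc: "exp (real m * c) = 1 / a"
    using mpos a by (simp add: c_def L_def exp_minus inverse_eq_divide)
  define r where "r = root m (1/l)"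
  define b where "b = root m (1/a)"
  have r0: "r \<ge> 0" and rm: "r ^ m = 1/l" using l m by (auto simp: r_def)
  have b0: "b > 0" and bm: "b ^ m = 1/a" using a m by (auto simp: b_def)
  have fm: "f w ^ m = 1 / (l + a * exp (real m * w))" if "0 \<le> w" for w
  proof -
    have "l + a * exp (real m * w) > 0" using l a by (simp add: add_pos_pos)
    then show ?thesis using sol[OF that] by (simp add: a_def field_simps)
  qed
  have up1: "f w \<le> r" if w: "0 \<le> w" for w
  proof (rule pow_le_base[of _ m])
    have "1 / (l + a * exp (real m * w)) \<le> 1 / l"
      using l a by (intro divide_left_mono) (auto simp: add_pos_pos)
    then show "f w ^ m \<le> r ^ m" using fm[OF w] rm by simp
  qed (use r0 m in auto)
  have up2: "f w \<le> b * exp (- w)" if w: "c \<le> w" for w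
  proof (rule pow_le_base[of _ m])
    have w0: "0 \<le> w" using w c by simp
    have "1 / (l + a * exp (real m * w)) \<le> 1 / (a * exp (real m * w))"
      using l a by (intro divide_left_mono) (auto intro!: mult_pos_pos add_pos_pos)
    also have "\<dots> = (b * exp (- w)) ^ m"
      using a by (simp add: power_mult_distrib bm exp_minus field_simps flip: exp_of_nat_mult)
    finally show "f w ^ m \<le> (b * exp (- w)) ^ m" using fm[OF w0] by simp
  qed (use b0 m in auto)
  have low: "1 - a * exp (real m * w) \<le> f w" if w: "0 \<le> w" "w \<le> c" for w
  proof (cases "1 - a * exp (real m * w) \<le> 0")
    case True then show ?thesis using pos[OF w(1)] by simp
  next
    case False
    define x where "x = a * exp (real m * w)"
    have x0: "0 \<le> x" "x < 1" using a False by (auto simp: x_def)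
    have "(1 - x) ^ m \<le> (1 - x) ^ 1"
      by (rule power_decreasing) (use m x0 in auto)
    also have "\<dots> \<le> 1 / (1 + x)"
    proof -
      have "(1 - x) * (1 + x) \<le> 1" by (simp add: algebra_simps)
      then show ?thesis using x0 by (simp add: field_simps)
    qed
    also have "\<dots> \<le> 1 / (l + x)"
      using x0 l by (intro divide_left_mono) auto
    also have "\<dots> = f w ^ m" using fm[OF w(1)] by (simp add: x_def)
    finally have "(1 - x) ^ m \<le> f w ^ m" .
    then show ?thesis unfolding x_def
      by (rule pow_le_base) (use pos[OF w(1)] m in auto)
  qed
  have int1: "f integrable_on {0..c}"
    by (rule integrable_continuous_interval, rule continuous_on_subset[OF cont]) auto
  have expi: "((\<lambda>w. exp (- 1 * w)) has_integral exp (- 1 * c) / 1) {c..}"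
    by (rule has_integral_exp_minus_to_infinity) simp
  have bexpi: "((\<lambda>w. b * exp (- 1 * w)) has_integral b * (exp (- 1 * c) / 1)) {c..}"
    by (rule has_integral_mult_right[OF expi])
  have int2: "f integrable_on {c..}"
  proof (rule measurable_bounded_by_integrable_imp_integrable_real)
    show "f \<in> borel_measurable (lebesgue_on {c..})"
      by (rule continuous_imp_measurable_on_sets_lebesgue, rule continuous_on_subset[OF cont])
        (use c in auto)
    show "(\<lambda>w. b * exp (- 1 * w)) integrable_on {c..}" using bexpi by blast
    show "\<bar>f x\<bar> \<le> b * exp (- 1 * x)" if "x \<in> {c..}" for x
      using up2[of x] pos[of x] that c by auto
  qed auto
  have split: "integral {0..} f = integral {0..c} f + integral {c..} f"
  proof -
    have "{0..} = {0..c} \<union> {c..}" using c by auto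
    moreover have "negligible ({0..c} \<inter> {c..})"
    proof -
      have "{0..c} \<inter> {c..} = {c}" using c by auto
      then show ?thesis by simp
    qed
    ultimately show ?thesis using integral_Un[OF int1 int2] by simp
  qed
  have bc: "b * exp (- c) = 1"
  proof -
    have "(b * exp (- c)) ^ m = 1 ^ m"
      using a mpos by (simp add: power_mult_distrib bm c_def L_def flip: exp_of_nat_mult)
    then show ?thesis using b0 m by (subst (asm) power_eq_iff_eq_base) auto
  qed
  have U1: "integral {0..c} f \<le> c * r"
  proof -
    have "integral {0..c} f \<le> integral {0..c} (\<lambda>_. r)"
      by (rule integral_le[OF int1]) (use up1 in auto)
    then show ?thesis using c by simp
  qed
  have U2: "integral {c..} f \<le> 1"
  proof -
    have "integral {c..} f \<le> integral {c..} (\<lambda>w. b * exp (- 1 * w))"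
      by (rule integral_le[OF int2]) (use bexpi up2 in auto)
    also have "\<dots> = 1" using integral_unique[OF bexpi] bc by simp
    finally show ?thesis .
  qed
  have L1: "c - 1 / m \<le> integral {0..c} f"
  proof -
    have ftc: "((\<lambda>w. 1 - a * exp (real m * w)) has_integral
        ((c - a * exp (real m * c) / m) - (0 - a * exp (real m * 0) / m))) {0..c}"
    proof (rule fundamental_theorem_of_calculus)
      show "0 \<le> c" using c by simp
      fix x assume "x \<in> {0..c}"
      have "((\<lambda>w. w - a * exp (real m * w) / m) has_real_derivative
          1 - a * exp (real m * x)) (at x within {0..c})"
        using mpos by (auto intro!: derivative_eq_intros)
      then show "((\<lambda>w. w - a * exp (real m * w) / m) has_vector_derivative
          1 - a * exp (real m * x)) (at x within {0..c})"
        using mpos by (simp add: has_real_derivative_iff_has_vector_derivative)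
    qed
    have "(c - a * exp (real m * c) / m) - (0 - a * exp (real m * 0) / m) = c - (1 - a) / m"
    proof -
      have "a * exp (real m * c) = 1" using emc a by simp
      then show ?thesis using mpos by (simp add: field_simps)
    qed
    also have "\<dots> \<ge> c - 1 / m" using a mpos by (simp add: divide_right_mono)
    finally have "c - 1 / m \<le> integral {0..c} (\<lambda>w. 1 - a * exp (real m * w))"
      using integral_unique[OF ftc] by simp
    also have "\<dots> \<le> integral {0..c} f"
      by (rule integral_le) (use ftc int1 low in auto)
    finally show ?thesis .
  qed
  have L2: "0 \<le> integral {c..} f"
    by (rule integral_nonneg[OF int2]) (use pos c in \<open>auto intro: less_imp_le\<close>)
  show ?thesis
    using split U1 U2 L1 L2 by (simp add: c_def L_def a_def r_def algebra_simps)
qed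


lemma L_at_top: "filterlim (\<lambda>l::real. - ln (1 - l)) at_top (at_left 1)"
  by real_asymp

theorem corollary2p4:
  fixes d :: nat and F :: "real \<Rightarrow> real \<Rightarrow> real"
  assumes d: "d \<ge> 2"
    and init: "\<And>l. 0 < l \<Longrightarrow> l < 1 \<Longrightarrow> F l 0 = 1"
    and ode: "\<And>l w. 0 < l \<Longrightarrow> l < 1 \<Longrightarrow> 0 \<le> w \<Longrightarrow>
               (F l has_real_derivative (l * F l w ^ d - F l w)) (at w within {0..})"
  shows "((\<lambda>l. - integral {0..} (F l) / ln (1 - l)) \<longlongrightarrow> 1 / (real d - 1)) (at_left 1)"
proof -
  obtain j where dj: "d = Suc (Suc j)" using d by (metis add_2_eq_Suc le_Suc_ex)
  define m where "m = Suc j"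
  have md: "real m = real d - 1" by (simp add: dj m_def)
  have mpos: "real m > 0" by (simp add: m_def)
  define L where "L l = - ln (1 - l)" for l :: real
  define I where "I l = integral {0..} (F l)" for l
  have bounds: "1 / m - inverse (L l) / m \<le> I l / L l \<and> I l / L l \<le> root m (1/l) / m + inverse (L l)"
    if l: "0 < l" "l < 1" for l
  proof -
    have ode': "\<And>w. 0 \<le> w \<Longrightarrow> (F l has_real_derivative (l * F l w ^ Suc (Suc j) - F l w)) (at w within {0..})"
      using ode[OF l] dj by simp
    have es: "\<forall>w\<ge>0. F l w ^ Suc j * (l + (1-l) * exp (real (Suc j) * w)) = 1 \<and> F l w > 0"
      by (rule explicit_sol[OF l init[OF l] ode'])
    have cont: "continuous_on {0..} (F l)"
      by (rule DERIV_continuous_on[OF ode']) auto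
    have b: "- ln (1-l) / m - 1 / m \<le> I l \<and> I l \<le> (- ln (1-l) / m) * root m (1/l) + 1"
      unfolding I_def
      by (rule int_bounds[OF _ l _ _ cont]) (use es in \<open>auto simp: m_def\<close>)
    have Lp: "L l > 0" using l by (simp add: L_def)
    have "1 / m - inverse (L l) / m = (L l / m - 1 / m) / L l"
      using Lp mpos by (simp add: field_simps)
    also have "\<dots> \<le> I l / L l"
      using b Lp by (intro divide_right_mono) (auto simp: L_def)
    finally have 1: "1 / m - inverse (L l) / m \<le> I l / L l" .
    have "I l / L l \<le> (L l / m * root m (1/l) + 1) / L l"
      using b Lp by (intro divide_right_mono) (auto simp: L_def)
    also have "\<dots> = root m (1/l) / m + inverse (L l)"
      using Lp mpos by (simp add: field_simps)
    finally show ?thesis using 1 by simp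
  qed
  have ev: "eventually (\<lambda>l. l \<in> {0<..<1}) (at_left (1::real))"
    by (rule eventually_at_left_real) simp
  have inv0: "((\<lambda>l. inverse (L l)) \<longlongrightarrow> 0) (at_left 1)"
    unfolding L_def by (rule tendsto_inverse_0_at_top[OF L_at_top])
  have lo: "((\<lambda>l. 1 / m - inverse (L l) / m) \<longlongrightarrow> 1 / m - 0 / m) (at_left 1)"
    by (intro tendsto_intros inv0) (use mpos in simp)
  have rt: "((\<lambda>l::real. root m (1/l)) \<longlongrightarrow> root m (1/1)) (at_left 1)"
    by (intro tendsto_intros) (auto intro: tendsto_ident_at)
  have hi: "((\<lambda>l. root m (1/l) / m + inverse (L l)) \<longlongrightarrow> root m (1/1) / m + 0) (at_left 1)"
    by (intro tendsto_intros rt inv0) (use mpos in simp)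
  have main: "((\<lambda>l. I l / L l) \<longlongrightarrow> 1 / m) (at_left 1)"
  proof (rule tendsto_sandwich[OF _ _ _ ])
    show "\<forall>\<^sub>F l in at_left 1. 1 / m - inverse (L l) / m \<le> I l / L l"
      using ev by eventually_elim (use bounds in auto)
    show "\<forall>\<^sub>F l in at_left 1. I l / L l \<le> root m (1/l) / m + inverse (L l)"
      using ev by eventually_elim (use bounds in auto)
    show "((\<lambda>l. 1 / m - inverse (L l) / m) \<longlongrightarrow> 1 / m) (at_left 1)" using lo by simp
    show "((\<lambda>l. root m (1/l) / m + inverse (L l)) \<longlongrightarrow> 1 / m) (at_left 1)" using hi mpos by (simp add: m_def)
  qed
  have eq: "(\<lambda>l. - integral {0..} (F l) / ln (1 - l)) = (\<lambda>l. I l / L l)"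
    by (simp add: I_def L_def fun_eq_iff)
  show ?thesis using main unfolding eq md .
qed

end
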